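(* Let $k\ge3$, $d>0$, $m=\lceil dn/2\rceil$ and $p=m/\left(\binom n2(1-1/k)^2\right)$. Then for any events $\mathcal E=\mathcal E_n$ we have $\pi^{\mathrm{pr}}_{n,m}[\mathcal E]\leq O(\sqrt n)\,\tilde\pi_{n,p}[\mathcal E]+o(1)$, where the constant in $O(\cdot)$ and the $o(1)$ term do not depend on $\mathcal E$.
   Context: For maps $\sigma,\tau:[n]\to[k]$, $\mathcal F(\sigma,\tau)$ is the number of pairs $\{u,v\}\subset[n]$, $u\ne v$, with $\sigma(u)=\sigma(v)$ or $\tau(u)=\tau(v)$. The planted replica model $\pi^{\mathrm{pr}}_{n,m}$ is the distribution of $(\hat G,\hat\sigma_1,\hat\sigma_2)$ obtained by choosing $\hat\sigma_1,\hat\sigma_2:[n]\to[k]$ independently and uniformly subject to $\mathcal F(\hat\sigma_1,\hat\sigma_2)\le\binom n2-m$, and then a uniformly random graph $\hat G$ on $[n]$ with exactly $m$ edges subject to both $\hat\sigma_1,\hat\sigma_2$ being proper colorings. The binomial planted replica model $\tilde\pi_{n,p}$ is the distribution of $(\tilde G,\hat\sigma_1,\hat\sigma_2)$ obtained by choosing $\hat\sigma_1,\hat\sigma_2:[n]\to[k]$ independently and uniformly, and then including each of the $\binom n2-\mathcal F(\hat\sigma_1,\hat\sigma_2)$ pairs $\{u,v\}$ that are bichromatic under both $\hat\sigma_1$ and $\hat\sigma_2$ as an edge independently with probability $p$. *)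

theory Defs
  imports "HOL-Probability.Probability"
begin

text \<open>Vertex set [n] is rendered as {..<n}; colour set [k] as {..<k}.
  A graph on [n] is a set of 2-element subsets of {..<n}.\<close>

type_synonym graph = "nat set set"
type_synonym coloring = "nat \<Rightarrow> nat"

definition vpairs :: "nat \<Rightarrow> nat set set" where
  "vpairs n = {{u, v} | u v. u < n \<and> v < n \<and> u \<noteq> v}"

definition colorings :: "nat \<Rightarrow> nat \<Rightarrow> coloring set" where
  "colorings n k = ({..<n} \<rightarrow>\<^sub>E {..<k})"

definition Fmono :: "nat \<Rightarrow> coloring \<Rightarrow> coloring \<Rightarrow> nat" where
  "Fmono n \<sigma> \<tau> = card {e \<in> vpairs n. \<exists>u v. e = {u, v} \<and> u \<noteq> v \<and>
                          (\<sigma> u = \<sigma> v \<or> \<tau> u = \<tau> v)}"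

definition bichrom :: "nat \<Rightarrow> coloring \<Rightarrow> coloring \<Rightarrow> nat set set" where
  "bichrom n \<sigma> \<tau> = {e \<in> vpairs n. \<forall>u v. e = {u, v} \<and> u \<noteq> v \<longrightarrow>
                          \<sigma> u \<noteq> \<sigma> v \<and> \<tau> u \<noteq> \<tau> v}"

definition proper_coloring :: "graph \<Rightarrow> coloring \<Rightarrow> bool" where
  "proper_coloring G \<sigma> \<longleftrightarrow> (\<forall>u v. {u, v} \<in> G \<and> u \<noteq> v \<longrightarrow> \<sigma> u \<noteq> \<sigma> v)"

definition planted_replica :: "nat \<Rightarrow> nat \<Rightarrow> nat \<Rightarrow> (graph \<times> coloring \<times> coloring) pmf" where
  "planted_replica k n m =
     pmf_of_set {(s1, s2). s1 \<in> colorings n k \<and> s2 \<in> colorings n k \<and>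
                           Fmono n s1 s2 \<le> (n choose 2) - m} \<bind>
     (\<lambda>(s1, s2). map_pmf (\<lambda>G. (G, s1, s2))
        (pmf_of_set {G. G \<subseteq> vpairs n \<and> card G = m \<and>
                        proper_coloring G s1 \<and> proper_coloring G s2}))"

definition binom_planted_replica :: "nat \<Rightarrow> nat \<Rightarrow> real \<Rightarrow> (graph \<times> coloring \<times> coloring) pmf" where
  "binom_planted_replica k n p =
     pmf_of_set (colorings n k \<times> colorings n k) \<bind>
     (\<lambda>(s1, s2). map_pmf (\<lambda>b. ({e \<in> bichrom n s1 s2. b e}, s1, s2))
        (Pi_pmf (bichrom n s1 s2) False (\<lambda>_. bernoulli_pmf p)))"

end

theory Submission
  imports Defs
begin


lemma card_dep:
  assumes "finite I" "J \<subseteq> I" "r ` J \<subseteq> I - J"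
  shows "card {\<sigma> \<in> (I \<rightarrow>\<^sub>E A). \<forall>j\<in>J. \<sigma> j = \<sigma> (r j)} = card A ^ card (I - J)"
proof -
  let ?X = "{\<sigma> \<in> (I \<rightarrow>\<^sub>E A). \<forall>j\<in>J. \<sigma> j = \<sigma> (r j)}"
  define g where "g \<tau> = (\<lambda>i. if i \<in> I then (if i \<in> J then \<tau> (r i) else \<tau> i) else undefined)" for \<tau> :: "'a \<Rightarrow> 'b"
  have "bij_betw (\<lambda>\<sigma>. restrict \<sigma> (I - J)) ?X ((I - J) \<rightarrow>\<^sub>E A)"
  proof (rule bij_betw_byWitness[where f'=g])
    show "\<forall>a\<in>?X. g (restrict a (I - J)) = a"
    proof
      fix a assume a: "a \<in> ?X"
      show "g (restrict a (I - J)) = a"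
      proof
        fix i show "g (restrict a (I - J)) i = a i"
        proof (cases "i \<in> I")
          case True
          show ?thesis
          proof (cases "i \<in> J")
            case True
            then have "r i \<in> I - J" using assms(3) by blast
            then show ?thesis using True a \<open>i \<in> I\<close> by (simp add: g_def)
          next
            case False
            then show ?thesis using \<open>i \<in> I\<close> by (simp add: g_def)
          qed
        next
          case False
          have "a \<in> I \<rightarrow>\<^sub>E A" using a by blast
          then have "a i = undefined" using False by (rule PiE_arb)
          then show ?thesis using False by (simp add: g_def)
        qed
      qed
    qed
    show "\<forall>a'\<in>((I - J) \<rightarrow>\<^sub>E A). restrict (g a') (I - J) = a'"
    proof
      fix a' assume a': "a' \<in> (I - J) \<rightarrow>\<^sub>E A"
      show "restrict (g a') (I - J) = a'"
      proof
        fix i show "restrict (g a') (I - J) i = a' i"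
        proof (cases "i \<in> I - J")
          case True then show ?thesis by (simp add: g_def)
        next
          case False
          then have "a' i = undefined" using a' by (meson PiE_arb)
          then show ?thesis using False by auto
        qed
      qed
    qed
    show "(\<lambda>\<sigma>. restrict \<sigma> (I - J)) ` ?X \<subseteq> ((I - J) \<rightarrow>\<^sub>E A)"
      by (auto simp: PiE_def)
    show "g ` ((I - J) \<rightarrow>\<^sub>E A) \<subseteq> ?X"
    proof
      fix s assume "s \<in> g ` ((I - J) \<rightarrow>\<^sub>E A)"
      then obtain t where t: "t \<in> (I - J) \<rightarrow>\<^sub>E A" and s: "s = g t" by blast
      have rJ: "\<And>j. j \<in> J \<Longrightarrow> r j \<in> I - J" using assms(3) by blast
      have "s \<in> I \<rightarrow>\<^sub>E A"
      proof (rule PiE_I)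
        fix i assume "i \<in> I"
        show "s i \<in> A"
        proof (cases "i \<in> J")
          case True then show ?thesis using t rJ[OF True] \<open>i \<in> I\<close> by (auto simp: s g_def)
        next
          case False then show ?thesis using t \<open>i \<in> I\<close> by (auto simp: s g_def)
        qed
      next
        fix i assume "i \<notin> I" then show "s i = undefined" by (simp add: s g_def)
      qed
      moreover have "\<forall>j\<in>J. s j = s (r j)"
      proof
        fix j assume j: "j \<in> J"
        then have "r j \<in> I - J" "j \<in> I" using rJ assms(2) by auto
        then show "s j = s (r j)" using j by (simp add: s g_def)
      qed
      ultimately show "s \<in> ?X" by blast
    qed
  qed
  then have "card ?X = card ((I - J) \<rightarrow>\<^sub>E A)" by (rule bij_betw_same_card)
  also have "\<dots> = card A ^ card (I - J)"
    using assms(1) by (simp add: card_PiE)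
  finally show ?thesis .
qed

definition Y :: "coloring \<Rightarrow> nat set \<Rightarrow> bool" where
  "Y \<sigma> e \<longleftrightarrow> (\<forall>u v. e = {u, v} \<and> u \<noteq> v \<longrightarrow> \<sigma> u \<noteq> \<sigma> v)"

lemma Y_pair: "u \<noteq> v \<Longrightarrow> Y \<sigma> {u, v} \<longleftrightarrow> \<sigma> u \<noteq> \<sigma> v"
  unfolding Y_def by (auto simp: doubleton_eq_iff)

lemma vpairsE:
  assumes "e \<in> vpairs n"
  obtains u v where "e = {u, v}" "u < n" "v < n" "u \<noteq> v"
  using assms unfolding vpairs_def by blast

lemma card_colorings: "card (colorings n k) = k ^ n"
  by (simp add: colorings_def card_PiE)

lemma finite_colorings: "finite (colorings n k)"
  by (simp add: colorings_def finite_PiE)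

lemma count1:
  assumes "e \<in> vpairs n"
  shows "card {\<sigma> \<in> colorings n k. \<not> Y \<sigma> e} = k ^ (n - 1)"
proof -
  obtain u v where e: "e = {u, v}" "u < n" "v < n" "u \<noteq> v" using assms by (rule vpairsE)
  have "{\<sigma> \<in> colorings n k. \<not> Y \<sigma> e} = {\<sigma> \<in> ({..<n} \<rightarrow>\<^sub>E {..<k}). \<forall>j\<in>{v}. \<sigma> j = \<sigma> ((\<lambda>_. u) j)}"
    unfolding e(1) Y_pair[OF e(4)] colorings_def by (auto simp: eq_commute)
  also have "card \<dots> = card {..<k} ^ card ({..<n} - {v})"
    by (rule card_dep) (use e in auto)
  also have "\<dots> = k ^ (n - 1)" using e by simp
  finally show ?thesis .
qed

lemma config:
  assumes "e \<in> vpairs n" "e' \<in> vpairs n" "e \<noteq> e'"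
  shows "\<exists>a b c d. e = {a, b} \<and> e' = {c, d} \<and> a \<noteq> b \<and> c \<noteq> d \<and> b \<noteq> d \<and> b \<noteq> c \<and> d \<noteq> a
     \<and> a < n \<and> b < n \<and> c < n \<and> d < n"
proof -
  obtain u v where e: "e = {u, v}" "u < n" "v < n" "u \<noteq> v" using assms(1) by (rule vpairsE)
  obtain w z where e': "e' = {w, z}" "w < n" "z < n" "w \<noteq> z" using assms(2) by (rule vpairsE)
  consider "u = w" | "u = z" | "v = w" | "v = z" | "u \<noteq> w \<and> u \<noteq> z \<and> v \<noteq> w \<and> v \<noteq> z" by blast
  then show ?thesis
  proof cases
    case 1
    then have "v \<noteq> z" using assms(3) e e' by auto
    then have "e = {u, v} \<and> e' = {u, z} \<and> u \<noteq> v \<and> u \<noteq> z \<and> v \<noteq> z \<and> v \<noteq> u \<and> z \<noteq> u \<and> u < n \<and> v < n \<and> u < n \<and> z < n" using 1 e e' by auto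
    then show ?thesis by blast
  next
    case 2
    then have "v \<noteq> w" using assms(3) e e' by auto
    then have "e = {u, v} \<and> e' = {u, w} \<and> u \<noteq> v \<and> u \<noteq> w \<and> v \<noteq> w \<and> v \<noteq> u \<and> w \<noteq> u \<and> u < n \<and> v < n \<and> u < n \<and> w < n" using 2 e e' by auto
    then show ?thesis by blast
  next
    case 3
    then have "u \<noteq> z" using assms(3) e e' by auto
    then have "e = {v, u} \<and> e' = {v, z} \<and> v \<noteq> u \<and> v \<noteq> z \<and> u \<noteq> z \<and> u \<noteq> v \<and> z \<noteq> v \<and> v < n \<and> u < n \<and> v < n \<and> z < n" using 3 e e' by auto
    then show ?thesis by blast
  next
    case 4
    then have "u \<noteq> w" using assms(3) e e' by auto
    then have "e = {v, u} \<and> e' = {v, w} \<and> v \<noteq> u \<and> v \<noteq> w \<and> u \<noteq> w \<and> u \<noteq> v \<and> w \<noteq> v \<and> v < n \<and> u < n \<and> v < n \<and> w < n" using 4 e e' by auto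
    then show ?thesis by blast
  next
    case 5
    then have "e = {u, v} \<and> e' = {w, z} \<and> u \<noteq> v \<and> w \<noteq> z \<and> v \<noteq> z \<and> v \<noteq> w \<and> z \<noteq> u \<and> u < n \<and> v < n \<and> w < n \<and> z < n" using e e' by auto
    then show ?thesis by blast
  qed
qed

lemma count2:
  assumes "e \<in> vpairs n" "e' \<in> vpairs n" "e \<noteq> e'"
  shows "card {\<sigma> \<in> colorings n k. \<not> Y \<sigma> e \<and> \<not> Y \<sigma> e'} = k ^ (n - 2)"
proof -
  obtain a b c d where h: "e = {a, b}" "e' = {c, d}" "a \<noteq> b" "c \<noteq> d" "b \<noteq> d" "b \<noteq> c" "d \<noteq> a"
     "a < n" "b < n" "c < n" "d < n"
    using config[OF assms] by blast
  define r where "r j = (if j = b then a else c)" for j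
  have "{\<sigma> \<in> colorings n k. \<not> Y \<sigma> e \<and> \<not> Y \<sigma> e'} = {\<sigma> \<in> ({..<n} \<rightarrow>\<^sub>E {..<k}). \<forall>j\<in>{b, d}. \<sigma> j = \<sigma> (r j)}"
    unfolding h(1,2) Y_pair[OF h(3)] Y_pair[OF h(4)] colorings_def using h(5,6) by (auto simp: r_def eq_commute)
  also have "card \<dots> = card {..<k} ^ card ({..<n} - {b, d})"
    by (rule card_dep) (use h in \<open>auto simp: r_def\<close>)
  also have "card ({..<n} - {b, d}) = n - 2" using h by (simp add: card_Diff_subset)
  finally show ?thesis by simp
qed


lemma vpairs_n2: "e \<in> vpairs n \<Longrightarrow> n \<ge> 2"
  by (erule vpairsE) linarith

lemma sum1:
  assumes "e \<in> vpairs n" "k \<ge> 1"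
  shows "(\<Sum>\<sigma>\<in>colorings n k. of_bool (Y \<sigma> e) :: real) = real k ^ n * (1 - 1 / real k)"
proof -
  have n2: "n \<ge> 2" using assms(1) by (rule vpairs_n2)
  have "(\<Sum>\<sigma>\<in>colorings n k. of_bool (Y \<sigma> e) :: real) = (\<Sum>\<sigma>\<in>colorings n k. 1 - of_bool (\<not> Y \<sigma> e))"
    by (rule sum.cong) auto
  also have "\<dots> = real (card (colorings n k)) - real (card (colorings n k \<inter> {\<sigma>. \<not> Y \<sigma> e}))"
    by (simp add: sum_subtractf finite_colorings)
  also have "colorings n k \<inter> {\<sigma>. \<not> Y \<sigma> e} = {\<sigma> \<in> colorings n k. \<not> Y \<sigma> e}" by blast
  also have "real (card (colorings n k)) - real (card \<dots>) = real k ^ n - real k ^ (n - 1)"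
    by (simp add: count1[OF assms(1)] card_colorings)
  also have "\<dots> = real k ^ n * (1 - 1 / real k)"
  proof -
    have "real k ^ n = real k * real k ^ (n - 1)" using n2 by (metis Suc_diff_1 less_le_trans pos2 power_Suc)
    then show ?thesis using assms(2) by (simp add: field_simps)
  qed
  finally show ?thesis .
qed

lemma sum2:
  assumes "e \<in> vpairs n" "e' \<in> vpairs n" "e \<noteq> e'" "k \<ge> 1"
  shows "(\<Sum>\<sigma>\<in>colorings n k. of_bool (Y \<sigma> e) * of_bool (Y \<sigma> e') :: real) = real k ^ n * (1 - 1 / real k)^2"
proof -
  have n2: "n \<ge> 2" using assms(1) by (rule vpairs_n2)
  let ?C = "colorings n k"
  have "(\<Sum>\<sigma>\<in>?C. of_bool (Y \<sigma> e) * of_bool (Y \<sigma> e') :: real)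
      = (\<Sum>\<sigma>\<in>?C. 1 - of_bool (\<not> Y \<sigma> e) - of_bool (\<not> Y \<sigma> e') + of_bool (\<not> Y \<sigma> e \<and> \<not> Y \<sigma> e'))"
    by (rule sum.cong) auto
  also have "\<dots> = real (card ?C) - real (card (?C \<inter> {\<sigma>. \<not> Y \<sigma> e})) - real (card (?C \<inter> {\<sigma>. \<not> Y \<sigma> e'}))
        + real (card (?C \<inter> {\<sigma>. \<not> Y \<sigma> e \<and> \<not> Y \<sigma> e'}))"
    by (simp add: sum_subtractf sum.distrib finite_colorings)
  also have "?C \<inter> {\<sigma>. \<not> Y \<sigma> e} = {\<sigma> \<in> ?C. \<not> Y \<sigma> e}" by blast
  also have "?C \<inter> {\<sigma>. \<not> Y \<sigma> e'} = {\<sigma> \<in> ?C. \<not> Y \<sigma> e'}" by blast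
  also have "?C \<inter> {\<sigma>. \<not> Y \<sigma> e \<and> \<not> Y \<sigma> e'} = {\<sigma> \<in> ?C. \<not> Y \<sigma> e \<and> \<not> Y \<sigma> e'}" by blast
  also have "real (card ?C) - real (card {\<sigma> \<in> ?C. \<not> Y \<sigma> e}) - real (card {\<sigma> \<in> ?C. \<not> Y \<sigma> e'})
        + real (card {\<sigma> \<in> ?C. \<not> Y \<sigma> e \<and> \<not> Y \<sigma> e'}) = real k ^ n - 2 * real k ^ (n - 1) + real k ^ (n - 2)"
    by (simp add: count1[OF assms(1)] count1[OF assms(2)] count2[OF assms(1-3)] card_colorings)
  also have "\<dots> = real k ^ n * (1 - 1 / real k)^2"
  proof -
    obtain j where j: "n = j + 2" using n2 by (metis add.commute le_Suc_ex)
    have "real k ^ n = real k ^ 2 * real k ^ j" "real k ^ (n - 1) = real k * real k ^ j" "real k ^ (n - 2) = real k ^ j"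
      unfolding j by (simp_all add: power_add power2_eq_square)
    then show ?thesis using assms(4) by (simp add: field_simps power2_eq_square)
  qed
  finally show ?thesis .
qed


lemma sum_prod_pairs:
  fixes f g :: "'a \<Rightarrow> real"
  shows "(\<Sum>s\<in>A \<times> B. f (fst s) * g (snd s)) = sum f A * sum g B"
proof -
  have "(\<Sum>s\<in>A \<times> B. f (fst s) * g (snd s)) = (\<Sum>(a, b)\<in>A \<times> B. f a * g b)"
    by (simp add: case_prod_beta')
  also have "\<dots> = (\<Sum>a\<in>A. \<Sum>b\<in>B. f a * g b)" by (simp add: sum.cartesian_product)
  also have "\<dots> = sum f A * sum g B" by (simp add: sum_product)
  finally show ?thesis .
qed

lemma bichrom_Y: "bichrom n s1 s2 = {e \<in> vpairs n. Y s1 e \<and> Y s2 e}"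
  unfolding bichrom_def Y_def by blast

lemma finite_vpairs: "finite (vpairs n)"
proof -
  have "vpairs n \<subseteq> Pow {..<n}" unfolding vpairs_def by auto
  then show ?thesis by (rule finite_subset) simp
qed

definition xx :: "coloring \<times> coloring \<Rightarrow> nat set \<Rightarrow> real" where
  "xx s e = of_bool (Y (fst s) e) * of_bool (Y (snd s) e)"

lemma card_bichrom_sum: "real (card (bichrom n s1 s2)) = (\<Sum>e\<in>vpairs n. xx (s1, s2) e)"
proof -
  have "(\<Sum>e\<in>vpairs n. xx (s1, s2) e) = (\<Sum>e\<in>vpairs n. of_bool (Y s1 e \<and> Y s2 e))"
    by (rule sum.cong) (auto simp: xx_def)
  also have "\<dots> = real (card (vpairs n \<inter> {e. Y s1 e \<and> Y s2 e}))"
    by (simp add: finite_vpairs)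
  also have "vpairs n \<inter> {e. Y s1 e \<and> Y s2 e} = bichrom n s1 s2" by (auto simp: bichrom_Y)
  finally show ?thesis by simp
qed

lemma pair_moment:
  assumes "e \<in> vpairs n" "e' \<in> vpairs n" "k \<ge> 1"
  defines "q \<equiv> (1 - 1 / real k)^2"
  shows "(\<Sum>s\<in>colorings n k \<times> colorings n k. (xx s e - q) * (xx s e' - q))
       = (if e = e' then (real k ^ n)^2 * q * (1 - q) else 0)"
proof -
  let ?S = "colorings n k \<times> colorings n k"
  let ?K = "real k ^ n"
  have cS: "real (card ?S) = ?K^2" by (simp add: card_cartesian_product card_colorings power2_eq_square)
  have s1: "(\<Sum>s\<in>?S. xx s e) = ?K^2 * q" if "e \<in> vpairs n" for e
  proof -
    have "(\<Sum>s\<in>?S. xx s e) = (\<Sum>\<sigma>\<in>colorings n k. of_bool (Y \<sigma> e)) * (\<Sum>\<sigma>\<in>colorings n k. of_bool (Y \<sigma> e))"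
      unfolding xx_def by (rule sum_prod_pairs)
    also have "\<dots> = ?K^2 * q" using sum1[OF that assms(3)] by (simp add: q_def power2_eq_square)
    finally show ?thesis .
  qed
  have exp: "(\<Sum>s\<in>?S. (xx s e - q) * (xx s e' - q))
      = (\<Sum>s\<in>?S. xx s e * xx s e') - q * (\<Sum>s\<in>?S. xx s e) - q * (\<Sum>s\<in>?S. xx s e') + real (card ?S) * q^2"
    by (simp add: algebra_simps sum.distrib sum_subtractf sum_distrib_left power2_eq_square)
  show ?thesis
  proof (cases "e = e'")
    case True
    have "(\<Sum>s\<in>?S. xx s e * xx s e) = (\<Sum>s\<in>?S. xx s e)"
      by (rule sum.cong) (auto simp: xx_def)
    then show ?thesis using True exp s1[OF assms(1)] cS by (simp add: algebra_simps power2_eq_square)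
  next
    case False
    have "(\<Sum>s\<in>?S. xx s e * xx s e') = (\<Sum>\<sigma>\<in>colorings n k. of_bool (Y \<sigma> e) * of_bool (Y \<sigma> e')) * (\<Sum>\<sigma>\<in>colorings n k. of_bool (Y \<sigma> e) * of_bool (Y \<sigma> e'))"
    proof -
      have "(\<Sum>s\<in>?S. xx s e * xx s e') = (\<Sum>s\<in>?S. (of_bool (Y (fst s) e) * of_bool (Y (fst s) e')) * (of_bool (Y (snd s) e) * of_bool (Y (snd s) e')))"
        by (rule sum.cong) (auto simp: xx_def)
      also have "\<dots> = (\<Sum>\<sigma>\<in>colorings n k. of_bool (Y \<sigma> e) * of_bool (Y \<sigma> e')) * (\<Sum>\<sigma>\<in>colorings n k. of_bool (Y \<sigma> e) * of_bool (Y \<sigma> e'))"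
        by (rule sum_prod_pairs[where f="\<lambda>\<sigma>. of_bool (Y \<sigma> e) * of_bool (Y \<sigma> e')" and g="\<lambda>\<sigma>. of_bool (Y \<sigma> e) * of_bool (Y \<sigma> e')"])
      finally show ?thesis .
    qed
    also have "\<dots> = ?K^2 * q^2" using sum2[OF assms(1,2) False assms(3)] by (simp add: q_def power2_eq_square)
    finally show ?thesis using False exp s1[OF assms(1)] s1[OF assms(2)] cS by (simp add: algebra_simps power2_eq_square)
  qed
qed


lemma variance:
  assumes "k \<ge> 1"
  defines "q \<equiv> (1 - 1 / real k)^2"
  shows "(\<Sum>s\<in>colorings n k \<times> colorings n k. (real (card (bichrom n (fst s) (snd s))) - real (card (vpairs n)) * q)^2)
       = real (card (vpairs n)) * (real k ^ n)^2 * q * (1 - q)"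
proof -
  let ?S = "colorings n k \<times> colorings n k"
  let ?V = "vpairs n"
  have a: "real (card (bichrom n (fst s) (snd s))) - real (card ?V) * q = (\<Sum>e\<in>?V. xx s e - q)" for s
    using card_bichrom_sum[of n "fst s" "snd s"] by (simp add: sum_subtractf)
  have "(\<Sum>s\<in>?S. (real (card (bichrom n (fst s) (snd s))) - real (card ?V) * q)^2)
      = (\<Sum>s\<in>?S. \<Sum>e\<in>?V. \<Sum>e'\<in>?V. (xx s e - q) * (xx s e' - q))"
    by (simp only: a power2_eq_square sum_product)
  also have "\<dots> = (\<Sum>e\<in>?V. \<Sum>e'\<in>?V. \<Sum>s\<in>?S. (xx s e - q) * (xx s e' - q))"
    by (simp add: sum.swap[of _ ?S])
  also have "\<dots> = (\<Sum>e\<in>?V. \<Sum>e'\<in>?V. if e = e' then (real k ^ n)^2 * q * (1 - q) else 0)"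
  proof (intro sum.cong refl)
    fix e e' assume "e \<in> ?V" "e' \<in> ?V"
    from pair_moment[OF this assms(1)] show "(\<Sum>s\<in>?S. (xx s e - q) * (xx s e' - q)) = (if e = e' then (real k ^ n)^2 * q * (1 - q) else 0)"
      unfolding q_def .
  qed
  also have "\<dots> = real (card ?V) * (real k ^ n)^2 * q * (1 - q)"
    by (simp add: finite_vpairs)
  finally show ?thesis .
qed




lemma ln_lower_pade:
  fixes x :: real
  assumes "x \<ge> 0"
  shows "2 * x / (2 + x) \<le> ln (1 + x)"
proof -
  let ?f = "\<lambda>t::real. ln (1 + t) - 2 * t / (2 + t)"
  have "?f 0 \<le> ?f x"
  proof (rule DERIV_nonneg_imp_nondecreasing[OF assms])
    fix t :: real assume t: "0 \<le> t" "t \<le> x"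
    have d: "DERIV ?f t :> (1 / (1 + t) - (2 * (2 + t) - 2 * t) / (2 + t)^2)"
      using t by (auto intro!: derivative_eq_intros simp: power2_eq_square)
    have "1 / (1 + t) - (2 * (2 + t) - 2 * t) / (2 + t)^2 = t^2 / ((1 + t) * (2 + t)^2)"
    proof -
      have "1 + t > 0" "2 + t > 0" using t by auto
      then show ?thesis by (simp add: divide_simps power2_eq_square) (simp add: algebra_simps)
    qed
    also have "\<dots> \<ge> 0" using t by simp
    finally show "\<exists>y. DERIV ?f t :> y \<and> y \<ge> 0" using d by blast
  qed
  then show ?thesis by simp
qed

lemma ln_fact_upper:
  assumes "m \<ge> 1"
  shows "ln (fact m) \<le> 1 - real m + (real m + 1/2) * ln (real m)"
  using assms
proof (induction m rule: dec_induct)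
  case base
  then show ?case by simp
next
  case (step m)
  have m: "real m \<ge> 1" using step.hyps by simp
  have key: "1 \<le> (real m + 1/2) * (ln (real m + 1) - ln (real m))"
  proof -
    have "ln (real m + 1) - ln (real m) = ln (1 + 1 / real m)"
    proof -
      have "1 + 1 / real m = (real m + 1) / real m" using m by (simp add: field_simps)
      then show ?thesis using m by (simp add: ln_div)
    qed
    moreover have a: "2 * (1 / real m) / (2 + 1 / real m) \<le> ln (1 + 1 / real m)"
      by (rule ln_lower_pade) simp
    moreover have b: "(real m + 1/2) * (2 * (1 / real m) / (2 + 1 / real m)) = 1"
      using m by (simp add: field_simps)
    have "(real m + 1/2) * (2 * (1 / real m) / (2 + 1 / real m)) \<le> (real m + 1/2) * ln (1 + 1 / real m)"
      using a m by (intro mult_left_mono) auto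
    ultimately show ?thesis using b by simp
  qed
  have "ln (fact (Suc m)) = ln (real m + 1) + ln (fact m)"
    using m by (simp add: ln_mult add.commute)
  also have "\<dots> \<le> ln (real m + 1) + 1 - real m + (real m + 1/2) * ln (real m)"
    using step.IH by simp
  also have "\<dots> \<le> 1 - real (Suc m) + (real (Suc m) + 1/2) * ln (real (Suc m))"
    using key by (simp add: algebra_simps)
  finally show ?case .
qed

lemma fact_upper:
  assumes "m \<ge> 1"
  shows "fact m \<le> exp (1 - real m + (real m + 1/2) * ln (real m))"
proof -
  have "exp (ln (fact m) :: real) \<le> exp (1 - real m + (real m + 1/2) * ln (real m))"
    using ln_fact_upper[OF assms] by (simp only: exp_le_cancel_iff)
  moreover have "exp (ln (fact m) :: real) = fact m" by (simp add: exp_ln)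
  ultimately show ?thesis by simp
qed

lemma pow_fact_le: "m \<le> N \<Longrightarrow> (N - m) ^ m * fact (N - m) \<le> (fact N :: nat)"
proof (induction m)
  case 0 then show ?case by simp
next
  case (Suc m)
  have IH: "(N - m) ^ m * fact (N - m) \<le> fact N" using Suc by simp
  have "(N - Suc m) ^ Suc m * fact (N - Suc m) = (N - Suc m) ^ m * ((N - Suc m) * fact (N - Suc m))"
    by simp
  also have "\<dots> \<le> (N - m) ^ m * fact (N - m)"
  proof (rule mult_mono)
    show "(N - Suc m) ^ m \<le> (N - m) ^ m" by (rule power_mono) auto
    have "N - m = Suc (N - Suc m)" using Suc.prems by simp
    then show "(N - Suc m) * fact (N - Suc m) \<le> fact (N - m)" by simp
  qed auto
  also have "\<dots> \<le> fact N" by (rule IH)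
  finally show ?case .
qed


lemma binom_lower:
  fixes N m :: nat and p :: real
  assumes m1: "m \<ge> 1" and mN: "2 * m \<le> N" and p0: "0 < p" and p1: "p \<le> 1/2"
    and eps: "\<bar>real N * p / real m - 1\<bar> \<le> 1/2"
  defines "\<epsilon> \<equiv> real N * p / real m - 1"
  shows "exp (- (2 * real m * \<epsilon>^2 + 2 * real m^2 / real N + 2 * real N * p^2 + 1)) / sqrt (real m)
         \<le> real (N choose m) * p ^ m * (1 - p) ^ (N - m)"
proof -
  have mpos: "real m > 0" using m1 by simp
  have Npos: "real N > 0" using mN m1 by simp
  have mleN: "m \<le> N" using mN by simp
  define x where "x = real m / real N"
  have x0: "0 \<le> x" and x1: "x \<le> 1/2" using mN Npos by (auto simp: x_def field_simps)
  have nat_ineq: "(N - m) ^ m \<le> fact m * (N choose m)"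
  proof -
    have "(N - m) ^ m * fact (N - m) \<le> fact m * (N choose m) * fact (N - m)"
      using pow_fact_le[OF mleN] binomial_fact_lemma[OF mleN] by (simp add: algebra_simps)
    then show ?thesis by simp
  qed
  have Cpos: "real (N choose m) > 0" using mleN by simp
  have Nm_pos: "real (N - m) > 0" using mN m1 by simp
  have lnC: "real m * ln (real (N - m)) \<le> ln (fact m) + ln (real (N choose m))"
  proof -
    have "real ((N - m) ^ m) \<le> real (fact m * (N choose m))" using nat_ineq by (simp only: of_nat_le_iff)
    then have "real (N - m) ^ m \<le> fact m * real (N choose m)" by simp
    then have "ln (real (N - m) ^ m) \<le> ln (fact m * real (N choose m))"
      using Nm_pos Cpos by (subst ln_le_cancel_iff) auto
    then show ?thesis using Cpos by (simp add: ln_realpow ln_mult)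
  qed
  have lnNm: "ln (real (N - m)) = ln (real N) + ln (1 - x)"
  proof -
    have "real (N - m) = real N * (1 - x)" using mleN Npos by (simp add: x_def field_simps of_nat_diff)
    moreover have "1 - x > 0" using x1 by simp
    ultimately show ?thesis using Npos by (simp add: ln_mult)
  qed
  have lnNp: "ln (real N) + ln p = ln (real m) + ln (1 + \<epsilon>)"
  proof -
    have "real N * p = real m * (1 + \<epsilon>)" using mpos by (simp add: \<epsilon>_def field_simps)
    moreover have "1 + \<epsilon> > 0" using eps unfolding \<epsilon>_def by linarith
    ultimately show ?thesis using Npos p0 mpos by (metis ln_mult_pos)
  qed
  have l1: "ln (1 + \<epsilon>) \<ge> \<epsilon> - 2 * \<epsilon>^2"
    using abs_ln_one_plus_x_minus_x_bound[of \<epsilon>] eps by (simp add: \<epsilon>_def abs_le_iff)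
  have l2: "ln (1 - x) \<ge> - 2 * x"
  proof -
    have "ln (1 - x) \<ge> - x - 2 * x^2" by (rule ln_one_minus_pos_lower_bound[OF x0 x1])
    moreover have "2 * x^2 \<le> x" using x0 x1 by (simp add: power2_eq_square) (metis mult_left_mono mult.commute mult_1 times_divide_eq_right mult_2 nonzero_mult_div_cancel_left zero_neq_numeral le_divide_eq_numeral1(1) mult.assoc)
    ultimately show ?thesis by simp
  qed
  have l3: "real (N - m) * ln (1 - p) \<ge> real N * (- p - 2 * p^2)"
  proof -
    have a: "ln (1 - p) \<ge> - p - 2 * p^2" by (rule ln_one_minus_pos_lower_bound) (use p0 p1 in auto)
    have b: "ln (1 - p) \<le> 0" using p0 p1 by simp
    have "real (N - m) * ln (1 - p) \<ge> real N * ln (1 - p)"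
      using b mleN by (intro mult_right_mono_neg) auto
    moreover have "real N * ln (1 - p) \<ge> real N * (- p - 2 * p^2)"
      using a by (intro mult_left_mono) auto
    ultimately show ?thesis by linarith
  qed
  have lf: "ln (fact m) \<le> 1 - real m + (real m + 1/2) * ln (real m)" by (rule ln_fact_upper[OF m1])
  define \<beta> where "\<beta> = real (N choose m) * p ^ m * (1 - p) ^ (N - m)"
  have bpos: "\<beta> > 0" using Cpos p0 p1 by (simp add: \<beta>_def)
  have lnb: "ln \<beta> = ln (real (N choose m)) + real m * ln p + real (N - m) * ln (1 - p)"
    using Cpos p0 p1 by (simp add: \<beta>_def ln_mult ln_realpow)
  have Np: "real N * p = real m * (1 + \<epsilon>)" using mpos by (simp add: \<epsilon>_def field_simps)
  have mx: "real m * x = real m ^ 2 / real N" by (simp add: x_def power2_eq_square)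
  have s1: "ln \<beta> \<ge> real m * ln (real (N - m)) - ln (fact m) + real m * ln p + real N * (- p - 2 * p^2)"
    using lnb lnC l3 by linarith
  have e1: "real m * ln (real (N - m)) + real m * ln p = real m * (ln (real N) + ln p + ln (1 - x))"
    using lnNm by (simp add: algebra_simps)
  also have "\<dots> = real m * (ln (real m) + ln (1 + \<epsilon>) + ln (1 - x))"
    using lnNp by simp
  finally have e2: "real m * ln (real (N - m)) + real m * ln p = real m * (ln (real m) + ln (1 + \<epsilon>) + ln (1 - x))" .
  have s2: "real m * (ln (real m) + ln (1 + \<epsilon>) + ln (1 - x)) \<ge> real m * (ln (real m) + (\<epsilon> - 2 * \<epsilon>^2) + (- 2 * x))"
    using l1 l2 mpos by (intro mult_left_mono) auto
  have "ln \<beta> \<ge> real m * (ln (real m) + (\<epsilon> - 2 * \<epsilon>^2) + (- 2 * x)) - (1 - real m + (real m + 1/2) * ln (real m))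
       - real N * p - 2 * real N * p^2"
    using s1 e2 s2 lf by (simp add: algebra_simps)
  also have "real m * (ln (real m) + (\<epsilon> - 2 * \<epsilon>^2) + (- 2 * x)) - (1 - real m + (real m + 1/2) * ln (real m))
       - real N * p - 2 * real N * p^2 = - (2 * real m * \<epsilon>^2 + 2 * real m^2 / real N + 2 * real N * p^2 + 1) - ln (real m) / 2"
    using Np mx by (simp add: algebra_simps)
  finally have "ln \<beta> \<ge> - (2 * real m * \<epsilon>^2 + 2 * real m^2 / real N + 2 * real N * p^2 + 1) - ln (real m) / 2" .
  then have "exp (- (2 * real m * \<epsilon>^2 + 2 * real m^2 / real N + 2 * real N * p^2 + 1) - ln (real m) / 2) \<le> \<beta>"
    using bpos by (metis exp_le_cancel_iff exp_ln)
  moreover have "exp (- (2 * real m * \<epsilon>^2 + 2 * real m^2 / real N + 2 * real N * p^2 + 1) - ln (real m) / 2)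
      = exp (- (2 * real m * \<epsilon>^2 + 2 * real m^2 / real N + 2 * real N * p^2 + 1)) / sqrt (real m)"
  proof -
    have "exp (ln (real m) / 2) = sqrt (real m)"
      using mpos by (simp add: powr_half_sqrt[symmetric] powr_def)
    then show ?thesis by (simp add: exp_diff)
  qed
  ultimately show ?thesis by (simp add: \<beta>_def)
qed




lemma measure_bind_pmf_of_set:
  assumes "finite S" "S \<noteq> {}"
  shows "measure_pmf.prob (pmf_of_set S \<bind> f) X = (\<Sum>x\<in>S. measure_pmf.prob (f x) X) / card S"
proof -
  have "emeasure (measure_pmf (pmf_of_set S \<bind> f)) X = (\<Sum>x\<in>S. emeasure (measure_pmf (f x)) X) / card S"
    using assms by (simp add: nn_integral_pmf_of_set)
  also have "\<dots> = ennreal ((\<Sum>x\<in>S. measure_pmf.prob (f x) X) / card S)"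
    using assms by (simp add: measure_pmf.emeasure_eq_measure sum_nonneg divide_ennreal ennreal_of_nat_eq_real_of_nat card_gt_0_iff)
  finally show ?thesis
    by (simp add: measure_pmf.emeasure_eq_measure sum_nonneg divide_nonneg_nonneg)
qed

lemma proper_Y: "proper_coloring G \<sigma> \<longleftrightarrow> (\<forall>e\<in>G. Y \<sigma> e)"
  unfolding proper_coloring_def Y_def by blast

lemma U_eq: "{G. G \<subseteq> vpairs n \<and> card G = m \<and> proper_coloring G s1 \<and> proper_coloring G s2}
   = {G. G \<subseteq> bichrom n s1 s2 \<and> card G = m}"
  unfolding proper_Y bichrom_Y by blast

lemma bichrom_sub: "bichrom n s1 s2 \<subseteq> vpairs n"
  unfolding bichrom_def by blast

lemma finite_bichrom: "finite (bichrom n s1 s2)"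
  by (rule finite_subset[OF bichrom_sub finite_vpairs])

lemma Fmono_eq: "Fmono n s1 s2 = card (vpairs n) - card (bichrom n s1 s2)"
proof -
  have "{e \<in> vpairs n. \<exists>u v. e = {u, v} \<and> u \<noteq> v \<and> (s1 u = s1 v \<or> s2 u = s2 v)} = vpairs n - bichrom n s1 s2"
    unfolding bichrom_def by blast
  then show ?thesis unfolding Fmono_def using bichrom_sub finite_bichrom by (simp add: card_Diff_subset)
qed

lemma card_vpairs: "card (vpairs n) = n choose 2"
proof -
  have "vpairs n = {A. A \<subseteq> {..<n} \<and> card A = 2}"
    unfolding vpairs_def by (auto simp: card_2_iff)
  then show ?thesis by (simp add: n_subsets)
qed

lemma planted_prob:
  fixes n k m :: nat and E
  defines "T \<equiv> {(s1, s2). s1 \<in> colorings n k \<and> s2 \<in> colorings n k \<and> Fmono n s1 s2 \<le> (n choose 2) - m}"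
  assumes "T \<noteq> {}" and mP: "m \<le> n choose 2"
  shows "measure_pmf.prob (planted_replica k n m) E =
     (\<Sum>s\<in>T. real (card {G. G \<subseteq> bichrom n (fst s) (snd s) \<and> card G = m \<and> (G, fst s, snd s) \<in> E})
         / real (card (bichrom n (fst s) (snd s)) choose m)) / real (card T)"
proof -
  have fT: "finite T"
  proof -
    have "T \<subseteq> colorings n k \<times> colorings n k" unfolding T_def by auto
    then show ?thesis by (rule finite_subset) (simp add: finite_colorings)
  qed
  have Bm: "m \<le> card (bichrom n s1 s2)" if "(s1, s2) \<in> T" for s1 s2
  proof -
    have "card (bichrom n s1 s2) \<le> card (vpairs n)" by (rule card_mono[OF finite_vpairs bichrom_sub])
    then show ?thesis using that mP unfolding T_def by (auto simp: Fmono_eq card_vpairs[symmetric])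
  qed
  have per: "measure_pmf.prob (case s of (s1, s2) \<Rightarrow> map_pmf (\<lambda>G. (G, s1, s2))
              (pmf_of_set {G. G \<subseteq> vpairs n \<and> card G = m \<and> proper_coloring G s1 \<and> proper_coloring G s2})) E
      = real (card {G. G \<subseteq> bichrom n (fst s) (snd s) \<and> card G = m \<and> (G, fst s, snd s) \<in> E})
         / real (card (bichrom n (fst s) (snd s)) choose m)" if s: "s \<in> T" for s
  proof -
    obtain s1 s2 where s12: "s = (s1, s2)" by (cases s)
    let ?U = "{G. G \<subseteq> bichrom n s1 s2 \<and> card G = m}"
    have fU: "finite ?U" using finite_bichrom by simp
    have cU: "card ?U = card (bichrom n s1 s2) choose m" by (rule n_subsets[OF finite_bichrom])
    have neU: "?U \<noteq> {}"
    proof -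
      have "card ?U > 0" unfolding cU using Bm s s12 by simp
      then show ?thesis by fastforce
    qed
    have "?U \<inter> (\<lambda>G. (G, s1, s2)) -` E = {G. G \<subseteq> bichrom n s1 s2 \<and> card G = m \<and> (G, s1, s2) \<in> E}" by blast
    then show ?thesis
      unfolding s12 U_eq using fU neU cU by (simp add: measure_pmf_of_set)
  qed
  show ?thesis
    unfolding planted_replica_def T_def[symmetric]
    by (simp add: measure_bind_pmf_of_set[OF fT assms(2)] per cong: sum.cong)
qed


lemma pmf_Pi_indicator:
  assumes "finite B" "G \<subseteq> B" "0 \<le> p" "p \<le> 1"
  shows "pmf (Pi_pmf B False (\<lambda>_. bernoulli_pmf p)) (\<lambda>e. e \<in> G) = p ^ card G * (1 - p) ^ (card B - card G)"
proof -
  have "pmf (Pi_pmf B False (\<lambda>_. bernoulli_pmf p)) (\<lambda>e. e \<in> G) = (\<Prod>e\<in>B. pmf (bernoulli_pmf p) (e \<in> G))"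
    using assms(1,2) by (subst pmf_Pi) auto
  also have "\<dots> = (\<Prod>e\<in>B. if e \<in> G then p else 1 - p)"
    using assms(3,4) by (intro prod.cong) auto
  also have "\<dots> = (\<Prod>e\<in>B \<inter> {e. e \<in> G}. p) * (\<Prod>e\<in>B \<inter> - {e. e \<in> G}. 1 - p)"
    using assms(1) by (rule prod.If_cases)
  also have "B \<inter> {e. e \<in> G} = G" using assms(2) by blast
  also have "B \<inter> - {e. e \<in> G} = B - G" by blast
  finally show ?thesis using assms(1,2) by (simp add: card_Diff_subset finite_subset)
qed

lemma binom_prob_lower:
  fixes n k m :: nat and p :: real and E
  assumes "0 \<le> p" "p \<le> 1" "k \<ge> 1"
  shows "(\<Sum>s\<in>colorings n k \<times> colorings n k.
       real (card {G. G \<subseteq> bichrom n (fst s) (snd s) \<and> card G = m \<and> (G, fst s, snd s) \<in> E})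
        * (p ^ m * (1 - p) ^ (card (bichrom n (fst s) (snd s)) - m)))
     / real (card (colorings n k \<times> colorings n k))
   \<le> measure_pmf.prob (binom_planted_replica k n p) E"
proof -
  let ?S = "colorings n k \<times> colorings n k"
  have fS: "finite ?S" by (simp add: finite_colorings)
  have neC: "colorings n k \<noteq> {}"
  proof -
    have "card (colorings n k) > 0" using assms(3) by (simp add: card_colorings)
    then show ?thesis by fastforce
  qed
  then have neS: "?S \<noteq> {}" by simp
  have per: "real (card {G. G \<subseteq> bichrom n (fst s) (snd s) \<and> card G = m \<and> (G, fst s, snd s) \<in> E})
        * (p ^ m * (1 - p) ^ (card (bichrom n (fst s) (snd s)) - m))
     \<le> measure_pmf.prob ((\<lambda>(s1, s2). map_pmf (\<lambda>b. ({e \<in> bichrom n s1 s2. b e}, s1, s2))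
        (Pi_pmf (bichrom n s1 s2) False (\<lambda>_. bernoulli_pmf p))) s) E" for s
  proof -
    obtain s1 s2 where s12: "s = (s1, s2)" by (cases s)
    let ?B = "bichrom n s1 s2"
    let ?W = "{G. G \<subseteq> ?B \<and> card G = m \<and> (G, s1, s2) \<in> E}"
    let ?P = "Pi_pmf ?B False (\<lambda>_. bernoulli_pmf p)"
    let ?f = "\<lambda>G e. e \<in> G"
    have fB: "finite ?B" by (rule finite_bichrom)
    have fW: "finite ?W" using fB by simp
    have inj: "inj_on ?f ?W" by (rule inj_onI) (auto simp: fun_eq_iff)
    have sub: "?f ` ?W \<subseteq> (\<lambda>b. ({e \<in> ?B. b e}, s1, s2)) -` E"
    proof
      fix b assume "b \<in> ?f ` ?W"
      then obtain G where G: "G \<in> ?W" "b = ?f G" by blast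
      then have "{e \<in> ?B. b e} = G" by auto
      then show "b \<in> (\<lambda>b. ({e \<in> ?B. b e}, s1, s2)) -` E" using G by simp
    qed
    have "real (card ?W) * (p ^ m * (1 - p) ^ (card ?B - m)) = (\<Sum>G\<in>?W. pmf ?P (?f G))"
      using pmf_Pi_indicator[OF fB _ assms(1,2)] by simp
    also have "\<dots> = (\<Sum>b\<in>?f ` ?W. pmf ?P b)" using sum.reindex[OF inj, of "pmf ?P"] by (simp add: comp_def)
    also have "\<dots> = measure_pmf.prob ?P (?f ` ?W)" using fW by (simp add: measure_measure_pmf_finite)
    also have "\<dots> \<le> measure_pmf.prob ?P ((\<lambda>b. ({e \<in> ?B. b e}, s1, s2)) -` E)"
      by (rule measure_pmf.finite_measure_mono[OF sub]) simp
    finally show ?thesis unfolding s12 by simp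
  qed
  have "(\<Sum>s\<in>?S. real (card {G. G \<subseteq> bichrom n (fst s) (snd s) \<and> card G = m \<and> (G, fst s, snd s) \<in> E})
        * (p ^ m * (1 - p) ^ (card (bichrom n (fst s) (snd s)) - m))) / real (card ?S)
      \<le> (\<Sum>s\<in>?S. measure_pmf.prob ((\<lambda>(s1, s2). map_pmf (\<lambda>b. ({e \<in> bichrom n s1 s2. b e}, s1, s2))
        (Pi_pmf (bichrom n s1 s2) False (\<lambda>_. bernoulli_pmf p))) s) E) / real (card ?S)"
    by (intro divide_right_mono sum_mono per) simp
  also have "\<dots> = measure_pmf.prob (binom_planted_replica k n p) E"
    unfolding binom_planted_replica_def by (rule measure_bind_pmf_of_set[OF fS neS, symmetric])
  finally show ?thesis .
qed




lemma choose2_real: "n \<ge> 1 \<Longrightarrow> 2 * real (n choose 2) = real n * (real n - 1)"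
proof -
  assume n: "n \<ge> 1"
  have "even (n * (n - 1))" by (cases "even n") auto
  then have "2 * (n choose 2) = n * (n - 1)" by (simp add: choose_two)
  then have "real (2 * (n choose 2)) = real (n * (n - 1))" by (simp only:)
  then show ?thesis using n by (simp add: of_nat_diff)
qed

lemma good_beta:
  fixes k n N :: nat and d :: real
  assumes k: "k \<ge> 3" and d: "d > 0" and n1: "real n \<ge> 324" and n2: "real n \<ge> 36 * d" and n3: "d * real n \<ge> 2"
  defines "m \<equiv> nat \<lceil>d * real n / 2\<rceil>"
  defines "q \<equiv> (1 - 1 / real k)^2"
  defines "N0 \<equiv> real (n choose 2) * q"
  defines "p \<equiv> real m / N0"
  assumes good: "(real N - N0)^2 \<le> real n ^ 3"
  shows "m \<ge> 1" "2 * m \<le> N" "real m \<le> d * real n" "0 < p" "p \<le> 1/2"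
    "exp (- (162 * d + 63 * d^2 + 1)) / (sqrt d * sqrt (real n)) \<le> real (N choose m) * p ^ m * (1 - p) ^ (N - m)"
proof -
  have nr: "real n > 0" using n1 by simp
  have q1: "q \<ge> 4/9"
  proof -
    have "1 / real k \<le> 1/3" using k by (simp add: field_simps)
    then have "1 - 1 / real k \<ge> 2/3" by simp
    then have "(2/3)^2 \<le> (1 - 1 / real k)^2" by (rule power_mono) simp
    then show ?thesis by (simp add: q_def power2_eq_square)
  qed
  have q2: "q \<le> 1"
  proof -
    have "0 \<le> 1 - 1 / real k" "1 - 1 / real k \<le> 1" using k by (auto simp: field_simps)
    then show ?thesis unfolding q_def by (simp add: power_le_one)
  qed
  have P: "2 * real (n choose 2) = real n * (real n - 1)" using choose2_real n1 by simp
  have N0lo: "N0 \<ge> real n ^ 2 / 9"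
  proof -
    have "N0 = real n * (real n - 1) / 2 * q" using P by (simp add: N0_def)
    moreover have "real n * (real n - 1) / 2 \<ge> real n ^ 2 / 4" using n1 by (simp add: power2_eq_square field_simps)
    moreover have "real n * (real n - 1) / 2 * q \<ge> real n ^ 2 / 4 * q"
      using \<open>real n * (real n - 1) / 2 \<ge> real n ^ 2 / 4\<close> q1 by (intro mult_right_mono) auto
    ultimately have "N0 \<ge> real n ^ 2 / 4 * q" by linarith
    moreover have "real n ^ 2 / 4 * q \<ge> real n ^ 2 / 4 * (4/9)" using q1 by (intro mult_left_mono) auto
    ultimately show ?thesis by simp
  qed
  have "real n ^ 2 / 9 > 0" using nr by simp
  then have N0pos: "N0 > 0" using N0lo by linarith
  have N0sq: "N0^2 \<ge> 4 * real n ^ 3"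
  proof -
    have "N0^2 \<ge> (real n ^ 2 / 9)^2" using N0lo nr by (intro power_mono) auto
    moreover have "(real n ^ 2 / 9)^2 \<ge> 4 * real n ^ 3"
    proof -
      have "(real n ^ 2 / 9)^2 = real n ^ 3 * (real n / 81)" by (simp add: power2_eq_square power3_eq_cube)
      moreover have "real n ^ 3 * (real n / 81) \<ge> real n ^ 3 * 4" using n1 by (intro mult_left_mono) auto
      ultimately show ?thesis by simp
    qed
    ultimately show ?thesis by simp
  qed
  have dev: "\<bar>real N - N0\<bar> \<le> N0 / 2"
  proof -
    have "(real N - N0)^2 \<le> (N0 / 2)^2" using good N0sq by (simp add: power2_eq_square)
    then have "\<bar>real N - N0\<bar>^2 \<le> (N0 / 2)^2" by simp
    then show ?thesis by (rule power2_le_imp_le) (use N0pos in simp)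
  qed
  have Nlo: "real N \<ge> N0 / 2" using dev by linarith
  have Nhi: "real N \<le> 3 * N0 / 2" using dev by linarith
  have mdef: "real m = real_of_int \<lceil>d * real n / 2\<rceil>" using d nr unfolding m_def by (simp add: order_less_imp_le)
  have "real_of_int \<lceil>d * real n / 2\<rceil> \<le> d * real n / 2 + 1" by (rule of_int_ceiling_le_add_one)
  then have m_hi: "real m \<le> d * real n" using mdef n3 by linarith
  have m_lo: "real m \<ge> d * real n / 2" using mdef by simp
  show "real m \<le> d * real n" by (rule m_hi)
  have "d * real n > 0" using d nr by simp
  then have mpos: "real m > 0" using m_lo by linarith
  show m1: "m \<ge> 1" using mpos by simp
  have "2 * real m \<le> 2 * d * real n" using m_hi by simp
  also have "\<dots> \<le> real n ^ 2 / 18"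
  proof -
    have "real n ^ 2 / 18 = real n * (real n / 18)" by (simp add: power2_eq_square)
    moreover have "real n * (real n / 18) \<ge> real n * (2 * d)" using n2 nr by (intro mult_left_mono) auto
    ultimately show ?thesis by (simp add: mult.commute)
  qed
  also have "\<dots> \<le> real N" using Nlo N0lo by simp
  finally have mN_r: "2 * real m \<le> real N" .
  then show mN: "2 * m \<le> N" by linarith
  have p0: "p > 0" using mpos N0pos by (simp add: p_def)
  have p_hi: "p \<le> 9 * d / real n"
  proof -
    have "p \<le> d * real n / (real n ^ 2 / 9)"
      unfolding p_def using m_hi N0lo mpos nr by (intro frac_le) auto
    also have "\<dots> = 9 * d / real n" using nr by (simp add: power2_eq_square field_simps)
    finally show ?thesis .
  qed
  have "9 * d / real n \<le> 1/2" using n2 nr by (simp add: divide_le_eq)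
  then have p1: "p \<le> 1/2" using p_hi by linarith
  show "0 < p" by (rule p0)
  show "p \<le> 1/2" by (rule p1)
  define \<epsilon> where "\<epsilon> = real N * p / real m - 1"
  have eps_eq: "\<epsilon> = (real N - N0) / N0" using mpos N0pos by (simp add: \<epsilon>_def p_def field_simps)
  have eps2: "\<epsilon>^2 \<le> 81 / real n"
  proof -
    have "\<epsilon>^2 = (real N - N0)^2 / N0^2" by (simp add: eps_eq power_divide)
    also have "\<dots> \<le> real n ^ 3 / (real n ^ 2 / 9)^2"
      using good N0lo nr by (intro frac_le) (auto intro: power_mono)
    also have "\<dots> = 81 / real n" using nr by (simp add: power2_eq_square power3_eq_cube field_simps)
    finally show ?thesis .
  qed
  have eps_abs: "\<bar>\<epsilon>\<bar> \<le> 1/2"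
  proof -
    have "81 / real n \<le> 1/4" using n1 nr by (simp add: divide_le_eq)
    then have "\<bar>\<epsilon>\<bar>^2 \<le> (1/2)^2" using eps2 by (simp add: power2_eq_square)
    then show ?thesis by (rule power2_le_imp_le) simp
  qed
  have B: "exp (- (2 * real m * \<epsilon>^2 + 2 * real m^2 / real N + 2 * real N * p^2 + 1)) / sqrt (real m)
         \<le> real (N choose m) * p ^ m * (1 - p) ^ (N - m)"
    using binom_lower[OF m1 mN p0 p1] eps_abs unfolding \<epsilon>_def by blast
  have K1: "2 * real m * \<epsilon>^2 \<le> 162 * d"
  proof -
    have "2 * real m * \<epsilon>^2 \<le> 2 * (d * real n) * (81 / real n)"
      using m_hi eps2 mpos by (intro mult_mono) auto
    then show ?thesis using nr by simp
  qed
  have K2: "2 * real m^2 / real N \<le> 36 * d^2"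
  proof -
    have "2 * real m^2 / real N \<le> 2 * (d * real n)^2 / (real n ^ 2 / 18)"
      using m_hi mpos Nlo N0lo nr by (intro frac_le) (auto intro!: power_mono mult_left_mono)
    also have "\<dots> = 36 * d^2" using nr by (simp add: power2_eq_square field_simps)
    finally show ?thesis .
  qed
  have K3: "2 * real N * p^2 \<le> 27 * d^2"
  proof -
    have "real N * p = real m * (real N / N0)" by (simp add: p_def)
    also have "\<dots> \<le> (d * real n) * (3/2)" using m_hi Nhi N0pos mpos by (intro mult_mono) (auto simp: field_simps)
    finally have a: "real N * p \<le> 3/2 * d * real n" by simp
    have b: "(real N * p) * p \<le> (3/2 * d * real n) * (9 * d / real n)"
      by (rule mult_mono[OF a p_hi]) (use d nr p0 in auto)
    have "2 * real N * p^2 = 2 * ((real N * p) * p)" by (simp add: power2_eq_square)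
    also have "\<dots> \<le> 2 * ((3/2 * d * real n) * (9 * d / real n))"
      using b by simp
    also have "\<dots> = 27 * d^2" using nr by (simp add: power2_eq_square)
    finally show ?thesis .
  qed
  have "exp (- (162 * d + 63 * d^2 + 1)) / (sqrt d * sqrt (real n))
      \<le> exp (- (2 * real m * \<epsilon>^2 + 2 * real m^2 / real N + 2 * real N * p^2 + 1)) / sqrt (real m)"
  proof (rule frac_le)
    show "exp (- (162 * d + 63 * d^2 + 1)) \<le> exp (- (2 * real m * \<epsilon>^2 + 2 * real m^2 / real N + 2 * real N * p^2 + 1))"
      using K1 K2 K3 by simp
    show "0 < sqrt (real m)" using mpos by simp
    have "sqrt (real m) \<le> sqrt (d * real n)" using m_hi by simp
    then show "sqrt (real m) \<le> sqrt d * sqrt (real n)" by (simp add: real_sqrt_mult)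
  qed simp
  with B show "exp (- (162 * d + 63 * d^2 + 1)) / (sqrt d * sqrt (real n)) \<le> real (N choose m) * p ^ m * (1 - p) ^ (N - m)"
    by linarith
qed


lemma bad_count:
  fixes n k :: nat
  assumes k: "k \<ge> 1" and n: "n \<ge> 1"
  defines "q \<equiv> (1 - 1 / real k)^2"
  defines "N0 \<equiv> real (n choose 2) * q"
  shows "real (card {s \<in> colorings n k \<times> colorings n k. (real (card (bichrom n (fst s) (snd s))) - N0)^2 > real n ^ 3})
     \<le> real (card (colorings n k \<times> colorings n k)) / (2 * real n)"
proof -
  let ?S = "colorings n k \<times> colorings n k"
  let ?f = "\<lambda>s. (real (card (bichrom n (fst s) (snd s))) - N0)^2"
  let ?Bad = "{s \<in> ?S. ?f s > real n ^ 3}"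
  have fS: "finite ?S" by (simp add: finite_colorings)
  have cS: "real (card ?S) = (real k ^ n)^2" by (simp add: card_cartesian_product card_colorings power2_eq_square)
  have q01: "0 \<le> q" "q \<le> 1"
  proof -
    have "0 \<le> 1 - 1 / real k" "1 - 1 / real k \<le> 1" using k by (auto simp: field_simps)
    then show "0 \<le> q" "q \<le> 1" unfolding q_def by (auto simp: power_le_one)
  qed
  have tot: "(\<Sum>s\<in>?S. ?f s) = real (card (vpairs n)) * (real k ^ n)^2 * q * (1 - q)"
    unfolding N0_def card_vpairs[symmetric] q_def by (rule variance[OF k])
  have "q * (1 - q) \<le> 1" using q01 by (smt (verit) mult_le_one)
  then have tot2: "(\<Sum>s\<in>?S. ?f s) \<le> real (n choose 2) * real (card ?S)"
  proof -
    have "(real k ^ n)^2 * (q * (1 - q)) \<le> (real k ^ n)^2" using \<open>q * (1 - q) \<le> 1\<close> by (simp add: mult_left_le)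
    then have "real (n choose 2) * ((real k ^ n)^2 * (q * (1 - q))) \<le> real (n choose 2) * (real k ^ n)^2"
      by (intro mult_left_mono) auto
    then show ?thesis unfolding tot cS card_vpairs by (simp add: mult.assoc)
  qed
  have P: "real (n choose 2) \<le> real n ^ 2 / 2" using choose2_real[OF n] by (simp add: power2_eq_square algebra_simps)
  have "real (card ?Bad) * real n ^ 3 = (\<Sum>s\<in>?Bad. real n ^ 3)" by simp
  also have "\<dots> \<le> (\<Sum>s\<in>?Bad. ?f s)" by (rule sum_mono) auto
  also have "\<dots> \<le> (\<Sum>s\<in>?S. ?f s)" by (rule sum_mono2[OF fS]) auto
  also have "\<dots> \<le> real n ^ 2 / 2 * real (card ?S)" using tot2 P by (meson mult_right_mono of_nat_0_le_iff order_trans)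
  finally have "real (card ?Bad) * real n ^ 3 \<le> real n ^ 2 / 2 * real (card ?S)" .
  then have "real (card ?Bad) * real n ^ 3 \<le> (real (card ?S) / (2 * real n)) * real n ^ 3"
    using n by (simp add: power2_eq_square power3_eq_cube field_simps)
  then show ?thesis by (rule mult_right_le_imp_le) (use n in simp)
qed




lemma main_n:
  fixes k n :: nat and d :: real and E :: "(graph \<times> coloring \<times> coloring) set"
  assumes k: "k \<ge> 3" and d: "d > 0" and n1: "real n \<ge> 324" and n2: "real n \<ge> 36 * d" and n3: "d * real n \<ge> 2"
  defines "m \<equiv> nat \<lceil>d * real n / 2\<rceil>"
  defines "p \<equiv> real m / (real (n choose 2) * (1 - 1 / real k)^2)"
  defines "c \<equiv> exp (- (162 * d + 63 * d^2 + 1)) / sqrt d"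
  shows "measure_pmf.prob (planted_replica k n m) E
     \<le> (2 / c) * sqrt (real n) * measure_pmf.prob (binom_planted_replica k n p) E + 1 / real n"
proof -
  define q where "q = (1 - 1 / real k)^2"
  define N0 where "N0 = real (n choose 2) * q"
  have p_eq: "p = real m / N0" by (simp add: p_def N0_def q_def)
  let ?S = "colorings n k \<times> colorings n k"
  define T where "T = {(s1, s2). s1 \<in> colorings n k \<and> s2 \<in> colorings n k \<and> Fmono n s1 s2 \<le> (n choose 2) - m}"
  define Good where "Good = {s \<in> ?S. (real (card (bichrom n (fst s) (snd s))) - N0)^2 \<le> real n ^ 3}"
  define NN where "NN s = card (bichrom n (fst s) (snd s))" for s
  define W where "W s = card {G. G \<subseteq> bichrom n (fst s) (snd s) \<and> card G = m \<and> (G, fst s, snd s) \<in> E}" for s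
  define f where "f s = real (W s) / real (NN s choose m)" for s
  define \<beta> where "\<beta> s = real (NN s choose m) * p ^ m * (1 - p) ^ (NN s - m)" for s
  have nr: "real n > 0" using n1 by simp
  have n_ge1: "n \<ge> 1" using nr by simp
  have k1: "k \<ge> 1" using k by simp
  have cpos: "c > 0" using d by (simp add: c_def)
  have fS: "finite ?S" by (simp add: finite_colorings)
  have cSpos: "card ?S > 0"
    using k1 by (simp add: card_cartesian_product card_colorings)
  have fT: "finite T" by (rule finite_subset[OF _ fS]) (auto simp: T_def)
  have GoodS: "Good \<subseteq> ?S" by (auto simp: Good_def)
  have gb: "m \<ge> 1 \<and> 2 * m \<le> NN s \<and> c / sqrt (real n) \<le> \<beta> s \<and> 0 < p \<and> p \<le> 1/2" if "s \<in> Good" for s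
  proof -
    have g: "(real (NN s) - N0)^2 \<le> real n ^ 3" using that by (simp add: Good_def NN_def)
    note G = good_beta[OF k d n1 n2 n3, of "NN s", folded m_def, folded q_def, folded N0_def, folded p_eq, OF g]
    have "c / sqrt (real n) = exp (- (162 * d + 63 * d^2 + 1)) / (sqrt d * sqrt (real n))"
      by (simp add: c_def)
    then show ?thesis using G by (simp add: \<beta>_def)
  qed
  have Fm: "Fmono n s1 s2 = (n choose 2) - card (bichrom n s1 s2)" for s1 s2
    by (simp add: Fmono_eq card_vpairs)
  have NN_le: "NN s \<le> n choose 2" for s
    unfolding NN_def card_vpairs[symmetric] by (rule card_mono[OF finite_vpairs bichrom_sub])
  have GoodT: "Good \<subseteq> T"
  proof
    fix s assume s: "s \<in> Good"
    obtain s1 s2 where s12: "s = (s1, s2)" by (cases s)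
    have "m \<le> NN s" using gb[OF s] by simp
    then have "Fmono n s1 s2 \<le> (n choose 2) - m" using s12 by (simp add: Fm NN_def diff_le_mono2)
    then show "s \<in> T" using s GoodS s12 by (auto simp: T_def)
  qed
  have bad: "real (card (?S - Good)) \<le> real (card ?S) / (2 * real n)"
  proof -
    have "?S - Good = {s \<in> ?S. (real (card (bichrom n (fst s) (snd s))) - N0)^2 > real n ^ 3}"
      by (auto simp: Good_def)
    then show ?thesis using bad_count[OF k1 n_ge1] by (simp add: N0_def q_def)
  qed
  have cG: "real (card Good) \<ge> real (card ?S) / 2"
  proof -
    have "card ?S = card Good + card (?S - Good)" using GoodS fS by (metis card_Diff_subset finite_subset add_diff_inverse_nat card_mono not_less)
    then have "real (card ?S) = real (card Good) + real (card (?S - Good))" by simp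
    moreover have "real (card ?S) / (2 * real n) \<le> real (card ?S) / 2"
      using n_ge1 by (intro divide_left_mono) auto
    ultimately show ?thesis using bad by linarith
  qed
  have cT: "real (card T) \<ge> real (card ?S) / 2"
    using card_mono[OF fT GoodT] cG by linarith
  have cTpos: "real (card T) > 0" using cT cSpos by linarith
  then have Tne: "T \<noteq> {}" by auto
  have Gne: "Good \<noteq> {}"
  proof
    assume "Good = {}" then show False using cG cSpos by simp
  qed
  then obtain s0 where s0: "s0 \<in> Good" by blast
  have mP: "m \<le> n choose 2" using gb[OF s0] NN_le[of s0] by linarith
  have p0: "0 \<le> p" and p1: "p \<le> 1" using gb[OF s0] by auto
  have planted: "measure_pmf.prob (planted_replica k n m) E = (\<Sum>s\<in>T. f s) / real (card T)"
    unfolding planted_prob[OF Tne[unfolded T_def] mP, folded T_def] f_def W_def NN_def by simp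
  have binom: "(\<Sum>s\<in>?S. real (W s) * (p ^ m * (1 - p) ^ (NN s - m))) / real (card ?S)
       \<le> measure_pmf.prob (binom_planted_replica k n p) E"
    using binom_prob_lower[OF p0 p1 k1, of n m E] unfolding W_def NN_def by simp
  have f01: "0 \<le> f s \<and> f s \<le> 1" for s
  proof -
    have "W s \<le> NN s choose m"
    proof -
      have "W s \<le> card {G. G \<subseteq> bichrom n (fst s) (snd s) \<and> card G = m}"
        unfolding W_def by (rule card_mono) (use finite_bichrom in auto)
      also have "\<dots> = NN s choose m" unfolding NN_def by (rule n_subsets[OF finite_bichrom])
      finally show ?thesis .
    qed
    then show ?thesis unfolding f_def by (cases "NN s choose m = 0") (auto simp: divide_le_eq_1)
  qed
  define A where "A = (\<Sum>s\<in>Good. f s)"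
  have A0: "A \<ge> 0" unfolding A_def using f01 by (intro sum_nonneg) auto
  have sumT: "(\<Sum>s\<in>T. f s) \<le> A + real (card ?S) / (2 * real n)"
  proof -
    have "(\<Sum>s\<in>T. f s) = (\<Sum>s\<in>T - Good. f s) + A"
      unfolding A_def by (rule sum.subset_diff[OF GoodT fT])
    moreover have "(\<Sum>s\<in>T - Good. f s) \<le> (\<Sum>s\<in>T - Good. 1)" using f01 by (intro sum_mono) auto
    moreover have "real (card (T - Good)) \<le> real (card (?S - Good))"
    proof -
      have "T \<subseteq> ?S" by (auto simp: T_def)
      then have "T - Good \<subseteq> ?S - Good" by blast
      then show ?thesis using fS by (simp add: card_mono)
    qed
    ultimately show ?thesis using bad by simp
  qed
  have binA: "c / sqrt (real n) * A / real (card ?S) \<le> measure_pmf.prob (binom_planted_replica k n p) E"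
  proof -
    have "c / sqrt (real n) * A = (\<Sum>s\<in>Good. f s * (c / sqrt (real n)))"
      unfolding A_def by (simp add: sum_distrib_left sum_divide_distrib mult.commute)
    also have "\<dots> \<le> (\<Sum>s\<in>Good. real (W s) * (p ^ m * (1 - p) ^ (NN s - m)))"
    proof (rule sum_mono)
      fix s assume s: "s \<in> Good"
      have Cpos: "real (NN s choose m) > 0" using gb[OF s] by simp
      have "f s * (c / sqrt (real n)) \<le> f s * \<beta> s" using gb[OF s] f01 by (intro mult_left_mono) auto
      also have "\<dots> = real (W s) * (p ^ m * (1 - p) ^ (NN s - m))"
        using Cpos by (simp add: f_def \<beta>_def)
      finally show "f s * (c / sqrt (real n)) \<le> real (W s) * (p ^ m * (1 - p) ^ (NN s - m))" .
    qed
    also have "\<dots> \<le> (\<Sum>s\<in>?S. real (W s) * (p ^ m * (1 - p) ^ (NN s - m)))"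
      by (rule sum_mono2[OF fS GoodS]) (use p0 p1 in auto)
    finally have "c / sqrt (real n) * A \<le> (\<Sum>s\<in>?S. real (W s) * (p ^ m * (1 - p) ^ (NN s - m)))" .
    then have "c / sqrt (real n) * A / real (card ?S) \<le> (\<Sum>s\<in>?S. real (W s) * (p ^ m * (1 - p) ^ (NN s - m))) / real (card ?S)"
      by (intro divide_right_mono) auto
    with binom show ?thesis by linarith
  qed
  have "measure_pmf.prob (planted_replica k n m) E \<le> (A + real (card ?S) / (2 * real n)) / real (card T)"
    unfolding planted using sumT cTpos by (intro divide_right_mono) auto
  also have "\<dots> = A / real (card T) + (real (card ?S) / (2 * real n)) / real (card T)"
    by (simp add: add_divide_distrib)
  also have "A / real (card T) \<le> A / (real (card ?S) / 2)"
    using A0 cT cSpos by (intro divide_left_mono) auto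
  also have "(real (card ?S) / (2 * real n)) / real (card T) \<le> (real (card ?S) / (2 * real n)) / (real (card ?S) / 2)"
    using cT cSpos nr by (intro divide_left_mono) auto
  also have "(real (card ?S) / (2 * real n)) / (real (card ?S) / 2) = 1 / real n"
    using cSpos nr by (simp add: field_simps)
  also have "A / (real (card ?S) / 2) = (2 / c) * sqrt (real n) * (c / sqrt (real n) * A / real (card ?S))"
    using cpos nr cSpos by (simp add: field_simps)
  also have "\<dots> \<le> (2 / c) * sqrt (real n) * measure_pmf.prob (binom_planted_replica k n p) E"
    using binA cpos by (intro mult_left_mono) auto
  finally show ?thesis by simp
qed


theorem lemma4p2:
  fixes k :: nat and d :: real
  assumes "k \<ge> 3" and "d > 0"
  defines "m \<equiv> (\<lambda>n::nat. nat \<lceil>d * real n / 2\<rceil>)"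
  defines "p \<equiv> (\<lambda>n::nat. real (m n) / (real (n choose 2) * (1 - 1 / real k)^2))"
  shows "\<exists>C::real. \<exists>\<delta>::nat \<Rightarrow> real. \<delta> \<longlonglongrightarrow> 0 \<and>
           (\<forall>\<^sub>F n in sequentially. \<forall>E :: (graph \<times> coloring \<times> coloring) set.
              measure_pmf.prob (planted_replica k n (m n)) E
                \<le> C * sqrt (real n) * measure_pmf.prob (binom_planted_replica k n (p n)) E + \<delta> n)"
proof -
  define c where "c = exp (- (162 * d + 63 * d^2 + 1)) / sqrt d"
  define n0 where "n0 = nat \<lceil>324 + 36 * d + 2 / d\<rceil>"
  have ev: "\<forall>\<^sub>F n in sequentially. \<forall>E :: (graph \<times> coloring \<times> coloring) set.
              measure_pmf.prob (planted_replica k n (m n)) E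
                \<le> (2 / c) * sqrt (real n) * measure_pmf.prob (binom_planted_replica k n (p n)) E + 1 / real n"
  proof (rule eventually_sequentiallyI[of n0])
    fix n assume n: "n0 \<le> n"
    have "324 + 36 * d + 2 / d \<le> real n0" unfolding n0_def by linarith
    also have "\<dots> \<le> real n" using n by simp
    finally have nb: "324 + 36 * d + 2 / d \<le> real n" .
    have d2: "2 / d > 0" using assms(2) by simp
    have n1: "real n \<ge> 324" using nb assms(2) d2 by linarith
    have n2: "real n \<ge> 36 * d" using nb assms(2) d2 by linarith
    have "d * real n \<ge> d * (2 / d)" using nb assms(2) d2 by (intro mult_left_mono) auto
    then have n3: "d * real n \<ge> 2" using assms(2) by simp
    show "\<forall>E :: (graph \<times> coloring \<times> coloring) set.
              measure_pmf.prob (planted_replica k n (m n)) E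
                \<le> (2 / c) * sqrt (real n) * measure_pmf.prob (binom_planted_replica k n (p n)) E + 1 / real n"
      using main_n[OF assms(1,2) n1 n2 n3] unfolding m_def p_def c_def by simp
  qed
  have "(\<lambda>n. 1 / real n) \<longlonglongrightarrow> 0" by (rule lim_1_over_n)
  with ev show ?thesis by blast
qed

end
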